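(* There is a deterministic algorithm which, given the level of every vertex of $G$ and access to a matrix-vector oracle $q\mapsto Mq$ (over $GF(2)$) for the adjacency matrix $M$ of $G$, correctly determines the parent of every non-root vertex of $G$ using $O(\log^2 n)$ oracle queries, where $G$ is any directed graph on vertex set $[n]$ that is the reflexive transitive closure of a branching.
   Context: A branching is a forest of rooted trees with all edges directed away from the roots; its reflexive transitive closure adds an edge $(u,w)$ whenever $w$ is reachable from $u$, including a loop at every vertex. The adjacency matrix $M\in\{0,1\}^{n\times n}$ has $M_{j,i}=1$ iff $(i,j)$ is an edge of $G$. The level of a vertex is its depth in the underlying branching (roots on level $0$); the parent of a vertex on level $\ell\geq1$ is its parent in the branching, i.e. its unique in-neighbor in $G$ on level $\ell-1$. *)

theory Defs
  imports Complex_Main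
begin

definition branching :: "nat \<Rightarrow> (nat \<times> nat) set \<Rightarrow> bool" where
  "branching n B \<longleftrightarrow> B \<subseteq> {0..<n} \<times> {0..<n} \<and> acyclic B \<and>
     (\<forall>j. card {i. (i, j) \<in> B} \<le> 1)"

definition closure_graph :: "nat \<Rightarrow> (nat \<times> nat) set \<Rightarrow> nat \<Rightarrow> nat \<Rightarrow> bool" where
  "closure_graph n B i j \<longleftrightarrow> i < n \<and> j < n \<and> (i, j) \<in> B\<^sup>*"

definition level :: "(nat \<times> nat) set \<Rightarrow> nat \<Rightarrow> nat" where
  "level B v = card {u. u \<noteq> v \<and> (u, v) \<in> B\<^sup>*}"

text \<open>Matrix-vector product over GF(2) (bool = GF(2)) for the adjacency matrix M of the
graph E, with M_{j,i} = 1 iff (i,j) is an edge. Vectors are bool lists of length n;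
a query list is read with zero padding.\<close>
definition mat_vec_oracle :: "nat \<Rightarrow> (nat \<Rightarrow> nat \<Rightarrow> bool) \<Rightarrow> bool list \<Rightarrow> bool list" where
  "mat_vec_oracle n E q = map (\<lambda>j. odd (card {i. i < n \<and> E i j \<and> i < length q \<and> q ! i})) [0..<n]"

text \<open>Deterministic adaptive oracle algorithms, as decision trees: either stop with a
result, or ask a query vector and continue depending on the answer.\<close>
datatype 'r qtree = Leaf 'r | Ask "bool list" "bool list \<Rightarrow> 'r qtree"

primrec run :: "(bool list \<Rightarrow> bool list) \<Rightarrow> 'r qtree \<Rightarrow> 'r \<times> nat" where
  "run orc (Leaf r) = (r, 0)"
| "run orc (Ask q k) = (let rc = run orc (k (orc q)) in (fst rc, Suc (snd rc)))"

end

theory Submission imports Defs begin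

definition anc :: "(nat \<times> nat) set \<Rightarrow> nat \<Rightarrow> nat set" where
  "anc B v = {u. (u, v) \<in> B\<^sup>*}"

lemma br_finite: "branching n B \<Longrightarrow> finite B"
  unfolding branching_def by (meson finite_SigmaI finite_atLeastLessThan finite_subset)

lemma anc_sub: "anc B v \<subseteq> insert v (Domain B)"
  unfolding anc_def by (auto elim: converse_rtranclE)

lemma anc_finite: "finite B \<Longrightarrow> finite (anc B v)"
  by (meson anc_sub finite_Domain finite_insert finite_subset)

lemma anc_self: "v \<in> anc B v" unfolding anc_def by simp

lemma anc_lt: "branching n B \<Longrightarrow> v < n \<Longrightarrow> u \<in> anc B v \<Longrightarrow> u < n"
proof -
  assume a: "branching n B" "v < n" "u \<in> anc B v"
  then have "u = v \<or> u \<in> Domain B" using anc_sub[of B v] by auto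
  then show "u < n" using a(1,2) unfolding branching_def by auto
qed

lemma level_anc: "level B v = card (anc B v - {v})"
  unfolding level_def anc_def by (rule arg_cong[where f=card]) auto

lemma par_unique: assumes "branching n B" "(p, v) \<in> B" "(q, v) \<in> B" shows "p = q"
proof -
  have f: "finite {i. (i, v) \<in> B}" using br_finite[OF assms(1)]
    by (metis (no_types, lifting) Domain.DomainI finite_Domain finite_subset mem_Collect_eq subsetI)
  have "card {i. (i, v) \<in> B} \<le> Suc 0" using assms(1) unfolding branching_def by auto
  then show ?thesis using card_le_Suc0_iff_eq[OF f] assms by auto
qed

lemma anc_root: "(\<forall>p. (p, v) \<notin> B) \<Longrightarrow> anc B v = {v}"
  unfolding anc_def by (auto elim: rtranclE)

lemma anc_par: assumes "branching n B" "(p, v) \<in> B"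
  shows "anc B v = insert v (anc B p)" "v \<notin> anc B p"
proof -
  show "anc B v = insert v (anc B p)"
  proof
    show "anc B v \<subseteq> insert v (anc B p)"
    proof
      fix x assume "x \<in> anc B v"
      then have "(x, v) \<in> B\<^sup>*" unfolding anc_def by simp
      then show "x \<in> insert v (anc B p)"
      proof (cases rule: rtranclE)
        case (step y)
        then have "y = p" using par_unique[OF assms(1)] assms(2) by blast
        then show ?thesis using step unfolding anc_def by simp
      qed simp
    qed
    show "insert v (anc B p) \<subseteq> anc B v"
      unfolding anc_def using assms(2) by (auto intro: rtrancl_into_rtrancl)
  qed
  show "v \<notin> anc B p"
  proof
    assume "v \<in> anc B p"
    then have "(v, v) \<in> B\<^sup>+" using assms(2) unfolding anc_def
      by (auto intro: rtrancl_into_trancl1)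
    then show False using assms(1) unfolding branching_def acyclic_def by auto
  qed
qed

lemma level_par: assumes "branching n B" "(p, v) \<in> B"
  shows "level B v = Suc (level B p)"
proof -
  have f: "finite (anc B p)" using anc_finite br_finite assms(1) by blast
  have "level B v = card (anc B p)" unfolding level_anc using anc_par[OF assms] by simp
  moreover have "level B p = card (anc B p) - 1" unfolding level_anc
    using card_Diff_singleton[OF anc_self] by simp
  moreover have "card (anc B p) > 0" using f anc_self card_gt_0_iff by blast
  ultimately show ?thesis by simp
qed

lemma level_root: "(\<forall>p. (p, v) \<notin> B) \<Longrightarrow> level B v = 0"
  unfolding level_anc using anc_root by simp


lemma anc_trans: "u \<in> anc B v \<Longrightarrow> x \<in> anc B u \<Longrightarrow> x \<in> anc B v"
  unfolding anc_def by auto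

lemma level_card: "finite B \<Longrightarrow> level B v = card (anc B v) - 1"
  unfolding level_anc using anc_finite anc_self by (simp add: card_Diff_singleton)

lemma anc_level_le: assumes "branching n B" "u \<in> anc B v" shows "level B u \<le> level B v"
proof -
  have f: "finite B" using br_finite assms(1) by blast
  have "anc B u \<subseteq> anc B v" using anc_trans assms(2) by blast
  then have "card (anc B u) \<le> card (anc B v)" using anc_finite[OF f] card_mono by blast
  then show ?thesis using level_card[OF f] by simp
qed

lemma tree_struct:
  assumes br: "branching n B"
  shows "level B v = l \<Longrightarrow>
    (\<forall>u\<in>anc B v. anc B u = {x\<in>anc B v. level B x \<le> level B u}) \<and>
    (\<forall>m\<le>l. \<exists>u\<in>anc B v. level B u = m) \<and>
    (\<forall>u1 u2. u1 \<in> anc B v \<longrightarrow> u2 \<in> anc B v \<longrightarrow> level B u1 = level B u2 \<longrightarrow> u1 = u2)"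
proof (induction l arbitrary: v)
  case 0
  then have "\<forall>p. (p, v) \<notin> B" using level_par[OF br] by fastforce
  then have "anc B v = {v}" by (rule anc_root)
  then show ?case using 0 by auto
next
  case (Suc l)
  then obtain p where p: "(p, v) \<in> B" using level_root by fastforce
  have lp: "level B p = l" using level_par[OF br p] Suc.prems by simp
  have A: "anc B v = insert v (anc B p)" "v \<notin> anc B p" using anc_par[OF br p] by auto
  have le: "\<And>u. u \<in> anc B p \<Longrightarrow> level B u \<le> l" using anc_level_le[OF br] lp by blast
  have lv: "level B v = Suc l" by fact
  note IH = Suc.IH[OF lp]
  have IH1: "\<And>u. u\<in>anc B p \<Longrightarrow> anc B u = {x\<in>anc B p. level B x \<le> level B u}" using IH by blast
  have IH2: "\<And>m. m \<le> l \<Longrightarrow> \<exists>u\<in>anc B p. level B u = m" using IH by blast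
  have IH3: "\<And>u1 u2. u1 \<in> anc B p \<Longrightarrow> u2 \<in> anc B p \<Longrightarrow> level B u1 = level B u2 \<Longrightarrow> u1 = u2"
    using IH by blast
  show ?case
  proof (intro conjI)
    show "\<forall>u\<in>anc B v. anc B u = {x \<in> anc B v. level B x \<le> level B u}"
    proof
      fix u assume u: "u \<in> anc B v"
      show "anc B u = {x \<in> anc B v. level B x \<le> level B u}"
      proof (cases "u = v")
        case True
        have "\<forall>x\<in>anc B v. level B x \<le> level B v" using anc_level_le[OF br] by blast
        then show ?thesis using True by auto
      next
        case False
        then have up: "u \<in> anc B p" using u A by auto
        then have "level B u < level B v" using le lv by fastforce
        then show ?thesis using IH1[OF up] A by auto
      qed
    qed
    show "\<forall>m\<le>Suc l. \<exists>u\<in>anc B v. level B u = m"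
    proof (intro allI impI)
      fix m assume "m \<le> Suc l"
      then consider "m = Suc l" | "m \<le> l" by linarith
      then show "\<exists>u\<in>anc B v. level B u = m"
      proof cases
        case 1 then show ?thesis using lv anc_self by blast
      next
        case 2 then show ?thesis using IH2 A by blast
      qed
    qed
    show "\<forall>u1 u2. u1 \<in> anc B v \<longrightarrow> u2 \<in> anc B v \<longrightarrow> level B u1 = level B u2 \<longrightarrow> u1 = u2"
    proof (intro allI impI)
      fix u1 u2 assume h: "u1 \<in> anc B v" "u2 \<in> anc B v" "level B u1 = level B u2"
      show "u1 = u2"
      proof (cases "u1 = v \<or> u2 = v")
        case True
        then show ?thesis using h A le lv by (metis Suc_n_not_le_n insertE)
      next
        case False
        then show ?thesis using h A IH3 by blast
      qed
    qed
  qed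
qed


primrec askfun :: "'i list \<Rightarrow> ('i \<Rightarrow> bool list) \<Rightarrow> (('i \<Rightarrow> bool list) \<Rightarrow> 'r) \<Rightarrow> 'r qtree" where
  "askfun [] Q f = Leaf (f (\<lambda>_. []))"
| "askfun (i # is) Q f = Ask (Q i) (\<lambda>a. askfun is Q (\<lambda>g. f (g(i := a))))"

lemma run_askfun:
  "\<exists>g. (\<forall>i\<in>set ids. g i = orc (Q i)) \<and> run orc (askfun ids Q f) = (f g, length ids)"
proof (induction ids arbitrary: f)
  case Nil
  then show ?case by auto
next
  case (Cons i "is")
  obtain g0 where g0: "\<forall>j\<in>set is. g0 j = orc (Q j)"
    "run orc (askfun is Q (\<lambda>g. f (g(i := orc (Q i))))) = (f (g0(i := orc (Q i))), length is)"
    using Cons.IH[of "\<lambda>g. f (g(i := orc (Q i)))"] by blast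
  show ?case
    by (rule exI[of _ "g0(i := orc (Q i))"]) (use g0 in \<open>auto simp: Let_def fun_upd_def\<close>)
qed

definition getb :: "bool list \<Rightarrow> nat \<Rightarrow> bool" where
  "getb a i = (i < length a \<and> a ! i)"

lemma getb_orc:
  assumes br: "branching n B" and x: "x < n" and q: "length q = n"
  shows "getb (mat_vec_oracle n (closure_graph n B) q) x = odd (card {i\<in>anc B x. q ! i})"
proof -
  have "{i. i < n \<and> closure_graph n B i x \<and> i < length q \<and> q ! i} = {i\<in>anc B x. q ! i}"
    using anc_lt[OF br x] x q unfolding closure_graph_def anc_def by auto
  then show ?thesis using x unfolding getb_def mat_vec_oracle_def by simp
qed

lemma getb_orc_n: "getb (mat_vec_oracle n E q) n = False"
  unfolding getb_def mat_vec_oracle_def by simp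

lemma bin_sum: "(\<Sum>b<K. if odd (a div 2^b) then 2^b else (0::nat)) = a mod 2^K"
proof (induction K)
  case 0
  then show ?case by simp
next
  case (Suc K)
  have "a mod 2 ^ Suc K = 2^K * (a div 2^K mod 2) + a mod 2^K"
    using mod_mult2_eq[of a "2^K" 2] by (simp add: mult.commute)
  then show ?case using Suc by (auto simp: odd_iff_mod_2_eq_one even_iff_mod_2_eq_zero)
qed

lemma window:
  fixes x c h :: nat
  assumes h: "h > 0" and t: "c * (2*h) < x" "x \<le> c * (2*h) + 2*h"
  shows "x mod (2*h) = h \<longleftrightarrow> x = c * (2*h) + h"
proof
  assume m: "x mod (2*h) = h"
  define q where "q = x div (2*h)"
  have xq: "x = q * (2*h) + h" using m q_def by (metis div_mult_mod_eq)
  have "c * (2*h) < (q+1) * (2*h)" using t xq by simp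
  then have "c < q + 1" by (metis mult_less_cancel2)
  moreover have "q * (2*h) < (c+1) * (2*h)" using t xq h by simp
  then have "q < c + 1" by (metis mult_less_cancel2)
  ultimately have "q = c" by simp
  then show "x = c * (2*h) + h" using xq by simp
next
  assume "x = c * (2*h) + h"
  then show "x mod (2*h) = h" using h by simp
qed


definition Kf :: "nat \<Rightarrow> nat" where "Kf n = (LEAST K. n \<le> 2 ^ K)"

definition Qv :: "nat \<Rightarrow> nat list \<Rightarrow> nat \<times> nat \<Rightarrow> bool list" where
  "Qv n lv kb = map (\<lambda>u. (lv ! u + 1) mod 2 ^ (fst kb) = 2 ^ (fst kb - 1) \<and> odd (u div 2 ^ (snd kb))) [0..<n]"

definition dcd :: "nat \<Rightarrow> (nat \<times> nat \<Rightarrow> bool list) \<Rightarrow> nat \<Rightarrow> nat \<Rightarrow> nat \<Rightarrow> nat" where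
  "dcd K g k v w = (\<Sum>b<K. if getb (g (k, b)) v \<noteq> getb (g (k, b)) w then 2 ^ b else 0)"

primrec st :: "nat \<Rightarrow> nat \<Rightarrow> (nat \<times> nat \<Rightarrow> bool list) \<Rightarrow> nat \<Rightarrow> nat \<Rightarrow> nat \<Rightarrow> nat" where
  "st K n g v l 0 = n"
| "st K n g v l (Suc j) = (if odd (l div 2 ^ (K - Suc j)) then dcd K g (K - j) v (st K n g v l j)
                           else st K n g v l j)"

lemma getb_g:
  assumes br: "branching n B" and x: "x < n"
    and G: "g (k, b) = mat_vec_oracle n (closure_graph n B) (Qv n (map (level B) [0..<n]) (k, b))"
  shows "getb (g (k, b)) x = odd (card {i\<in>anc B x. (level B i + 1) mod 2 ^ k = 2 ^ (k - 1) \<and> odd (i div 2 ^ b)})"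
proof -
  have "getb (g (k, b)) x = odd (card {i\<in>anc B x. Qv n (map (level B) [0..<n]) (k, b) ! i})"
    unfolding G by (rule getb_orc[OF br x]) (simp add: Qv_def)
  also have "{i\<in>anc B x. Qv n (map (level B) [0..<n]) (k, b) ! i} =
     {i\<in>anc B x. (level B i + 1) mod 2 ^ k = 2 ^ (k - 1) \<and> odd (i div 2 ^ b)}"
    using anc_lt[OF br x] by (auto simp: Qv_def)
  finally show ?thesis .
qed

lemma dcd_correct:
  assumes br: "branching n B" and v: "v < n" and k: "1 \<le> k"
    and G: "\<And>b. b < K \<Longrightarrow> g (k, b) = mat_vec_oracle n (closure_graph n B) (Qv n (map (level B) [0..<n]) (k, b))"
    and t: "t = c * 2 ^ k" and lv1: "level B v + 1 \<le> t + 2 ^ k"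
    and w: "(w = n \<and> t = 0) \<or> (w \<in> anc B v \<and> level B w + 1 = t)"
    and a: "a \<in> anc B v" "level B a + 1 = t + 2 ^ (k - 1)"
    and nK: "n \<le> 2 ^ K"
  shows "dcd K g k v w = a"
proof -
  have f: "finite (anc B v)" using anc_finite br_finite br by blast
  have uniq: "\<And>u1 u2. u1 \<in> anc B v \<Longrightarrow> u2 \<in> anc B v \<Longrightarrow> level B u1 = level B u2 \<Longrightarrow> u1 = u2"
    using tree_struct[OF br refl, of v] by blast
  have ancw: "\<And>u. u \<in> anc B v \<Longrightarrow> anc B u = {x\<in>anc B v. level B x \<le> level B u}"
    using tree_struct[OF br refl, of v] by blast
  have lev_le: "\<And>u. u \<in> anc B v \<Longrightarrow> level B u \<le> level B v" using anc_level_le[OF br] by blast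
  define h :: nat where "h = 2 ^ (k - 1)"
  have h0: "h > 0" unfolding h_def by simp
  have kh: "2 ^ k = 2 * h"
  proof -
    have "(2::nat) ^ k = 2 ^ (Suc (k - 1))" using k by simp
    then show ?thesis unfolding h_def by simp
  qed
  have bit: "(getb (g (k, b)) v \<noteq> getb (g (k, b)) w) = odd (a div 2 ^ b)" if b: "b < K" for b
  proof -
    define P where "P i \<longleftrightarrow> (level B i + 1) mod 2 ^ k = 2 ^ (k - 1) \<and> odd (i div 2 ^ b)" for i
    define W where "W = {x\<in>anc B v. level B x + 1 \<le> t}"
    have split: "{i\<in>anc B v. P i} = {i\<in>W. P i} \<union> {i\<in>anc B v. t < level B i + 1 \<and> P i}"
      unfolding W_def by auto
    have sec: "{i\<in>anc B v. t < level B i + 1 \<and> P i} = (if odd (a div 2 ^ b) then {a} else {})"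
    proof -
      have A: "i = a" if i: "i \<in> anc B v" "t < level B i + 1" "(level B i + 1) mod 2 ^ k = 2 ^ (k - 1)" for i
      proof -
        have "level B i + 1 \<le> c * (2 * h) + 2 * h" using lev_le[OF i(1)] lv1 t kh by simp
        then have "level B i + 1 = c * (2 * h) + h"
          using window[OF h0, of c "level B i + 1"] i t kh h_def by simp
        then have "level B i = level B a" using a t kh h_def by simp
        then show ?thesis using uniq i(1) a(1) by blast
      qed
      have B: "t < level B a + 1" using a h0 h_def by simp
      have C: "(level B a + 1) mod 2 ^ k = 2 ^ (k - 1)"
        using a t kh h_def window[OF h0, of c "level B a + 1"] h0 by simp
      show ?thesis
      proof (cases "odd (a div 2 ^ b)")
        case True
        then have e: "(if odd (a div 2 ^ b) then {a} else {}) = {a}" by simp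
        show ?thesis unfolding e P_def using True A B C a(1) by blast
      next
        case False
        then have e: "(if odd (a div 2 ^ b) then {a} else {}) = {}" by simp
        show ?thesis unfolding e P_def using False A by blast
      qed
    qed
    have disj: "{i\<in>W. P i} \<inter> {i\<in>anc B v. t < level B i + 1 \<and> P i} = {}" unfolding W_def by auto
    have cv: "card {i\<in>anc B v. P i} = card {i\<in>W. P i} + (if odd (a div 2 ^ b) then 1 else 0)"
      unfolding split using f disj sec by (subst card_Un_disjoint) (auto simp: W_def)
    have gv: "getb (g (k, b)) v = odd (card {i\<in>anc B v. P i})"
      unfolding P_def using getb_g[where g=g and k=k and b=b, OF br v G[OF b]] .
    have gw: "getb (g (k, b)) w = odd (card {i\<in>W. P i})"
      using w
    proof
      assume "w = n \<and> t = 0"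
      then have "W = {}" "w = n" unfolding W_def by auto
      then show ?thesis using G[OF b] getb_orc_n by simp
    next
      assume w': "w \<in> anc B v \<and> level B w + 1 = t"
      then have wn: "w < n" using anc_lt[OF br v] by blast
      have "anc B w = W" using ancw w' unfolding W_def by auto
      then show ?thesis unfolding P_def using getb_g[where g=g and k=k and b=b, OF br wn G[OF b]] by simp
    qed
    show ?thesis using gv gw cv by auto
  qed
  have "dcd K g k v w = (\<Sum>b<K. if odd (a div 2^b) then 2^b else (0::nat))"
    unfolding dcd_def using bit by (intro sum.cong) auto
  also have "\<dots> = a mod 2 ^ K" by (rule bin_sum)
  also have "\<dots> = a" using anc_lt[OF br v a(1)] nK by simp
  finally show ?thesis .
qed


lemma st_inv:
  assumes br: "branching n B" and v: "v < n" and nK: "n \<le> 2 ^ K" and l: "l = level B v"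
    and G: "\<And>k b. 1 \<le> k \<Longrightarrow> k \<le> K \<Longrightarrow> b < K \<Longrightarrow>
      g (k, b) = mat_vec_oracle n (closure_graph n B) (Qv n (map (level B) [0..<n]) (k, b))"
  shows "j \<le> K \<Longrightarrow> (2 ^ (K - j) * (l div 2 ^ (K - j)) = 0 \<longrightarrow> st K n g v l j = n) \<and>
     (0 < 2 ^ (K - j) * (l div 2 ^ (K - j)) \<longrightarrow> st K n g v l j \<in> anc B v \<and>
        level B (st K n g v l j) + 1 = 2 ^ (K - j) * (l div 2 ^ (K - j)))"
proof (induction j)
  case 0
  have "anc B v \<subseteq> {..<n}" using anc_lt[OF br v] by blast
  then have "card (anc B v) \<le> n" using card_mono[of "{..<n}" "anc B v"] by simp
  then have "l < n" using level_card[OF br_finite[OF br], of v] l v by linarith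
  then have "l div 2 ^ K = 0" using nK by simp
  then show ?case by simp
next
  case (Suc j)
  define k' where "k' = K - Suc j"
  define k where "k = K - j"
  have kk: "k = Suc k'" using Suc.prems unfolding k_def k'_def by simp
  define T where "T = 2 ^ k * (l div 2 ^ k)"
  define T' where "T' = 2 ^ k' * (l div 2 ^ k')"
  have IH: "(T = 0 \<longrightarrow> st K n g v l j = n) \<and> (0 < T \<longrightarrow> st K n g v l j \<in> anc B v \<and> level B (st K n g v l j) + 1 = T)"
    using Suc.IH Suc.prems unfolding T_def k_def by simp
  have d: "l div 2 ^ k = l div 2 ^ k' div 2" unfolding kk power_Suc2 by (rule div_mult2_eq)
  have e: "l div 2 ^ k' = 2 * (l div 2 ^ k) + l div 2 ^ k' mod 2" unfolding d by simp
  have TT: "T' = T + 2 ^ k' * (l div 2 ^ k' mod 2)"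
    unfolding T'_def T_def kk by (subst e) (simp add: algebra_simps kk)
  have goal_eq: "2 ^ (K - Suc j) * (l div 2 ^ (K - Suc j)) = T'" unfolding T'_def k'_def ..
  have main: "(T' = 0 \<longrightarrow> st K n g v l (Suc j) = n) \<and> (0 < T' \<longrightarrow> st K n g v l (Suc j) \<in> anc B v \<and> level B (st K n g v l (Suc j)) + 1 = T')"
  proof (cases "odd (l div 2 ^ k')")
    case False
    then have "T' = T" using TT by (simp add: even_iff_mod_2_eq_zero)
    moreover have "st K n g v l (Suc j) = st K n g v l j" using False unfolding k'_def by simp
    ultimately show ?thesis using IH by simp
  next
    case True
    then have T'T: "T' = T + 2 ^ k'" using TT by (simp add: odd_iff_mod_2_eq_one)
    have stS: "st K n g v l (Suc j) = dcd K g k v (st K n g v l j)" using True unfolding k'_def k_def by simp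
    have "l div 2 ^ k' * 2 ^ k' \<le> l" by (rule div_times_less_eq_dividend)
    then have T'l: "T' \<le> l" unfolding T'_def by (simp only: mult.commute)
    have T'0: "0 < T'" using T'T by simp
    have ex: "\<forall>m\<le>l. \<exists>u\<in>anc B v. level B u = m" using tree_struct[OF br l[symmetric]] by blast
    have "T' - 1 \<le> l" using T'l by simp
    then obtain a where a: "a \<in> anc B v" "level B a = T' - 1" using ex by blast
    have a1: "level B a + 1 = T + 2 ^ (k - 1)" using a T'0 T'T kk by simp
    have lv1: "level B v + 1 \<le> T + 2 ^ k"
    proof -
      have "l mod 2 ^ k < 2 ^ k" by simp
      moreover have "l = 2 ^ k * (l div 2 ^ k) + l mod 2 ^ k" by simp
      ultimately show ?thesis unfolding T_def l by linarith
    qed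
    have "dcd K g k v (st K n g v l j) = a"
    proof (rule dcd_correct[OF br v _ _ _ lv1 _ a(1) a1 nK])
      show "1 \<le> k" using kk by simp
      show "\<And>b. b < K \<Longrightarrow> g (k, b) = mat_vec_oracle n (closure_graph n B) (Qv n (map (level B) [0..<n]) (k, b))"
        using G kk unfolding k_def by simp
      show "T = (l div 2 ^ k) * 2 ^ k" unfolding T_def by simp
      show "st K n g v l j = n \<and> T = 0 \<or> st K n g v l j \<in> anc B v \<and> level B (st K n g v l j) + 1 = T"
        using IH by auto
    qed
    then show ?thesis using stS a T'0 by simp
  qed
  then show ?case unfolding goal_eq .
qed

lemma Kf_props: assumes "2 \<le> n" shows "n \<le> 2 ^ Kf n" "1 \<le> Kf n" "2 ^ (Kf n - 1) < n"
proof -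
  have ex: "n \<le> 2 ^ n" using less_exp[of n] by simp
  show A: "n \<le> 2 ^ Kf n" unfolding Kf_def by (rule LeastI[of _ n]) (rule ex)
  show B: "1 \<le> Kf n"
  proof (rule ccontr)
    assume "\<not> 1 \<le> Kf n" then have "Kf n = 0" by simp
    then show False using A assms by simp
  qed
  have "\<not> n \<le> 2 ^ (Kf n - 1)" unfolding Kf_def
    by (rule not_less_Least) (use B in \<open>simp add: Kf_def\<close>)
  then show "2 ^ (Kf n - 1) < n" by simp
qed

lemma Kf_bound: assumes "2 \<le> n"
  shows "real (Kf n * Kf n) \<le> 4 / (ln 2)^2 * (ln (real n))^2"
proof -
  define K where "K = Kf n"
  have p: "2 ^ (K - 1) < n" "1 \<le> K" using Kf_props[OF assms] K_def by auto
  have l2: "0 < ln (2::real)" by simp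
  have "real (2 ^ (K - 1)) < real n" using p by linarith
  then have "ln (real (2 ^ (K - 1))) < ln (real n)" by simp
  then have "real (K - 1) * ln 2 < ln (real n)" by (simp add: ln_realpow)
  moreover have "ln 2 \<le> ln (real n)" using assms by simp
  moreover have "real K * ln 2 = real (K - 1) * ln 2 + ln 2" using p by (simp add: of_nat_diff algebra_simps)
  ultimately have kb: "real K * ln 2 \<le> 2 * ln (real n)" by linarith
  have "(real K * ln 2)^2 \<le> (2 * ln (real n))^2"
    by (rule power_mono[OF kb]) (simp)
  then have "real K ^ 2 * (ln 2)^2 \<le> 4 * (ln (real n))^2" by (simp add: power_mult_distrib)
  then have "real K ^ 2 \<le> 4 * (ln (real n))^2 / (ln 2)^2" using l2 by (simp add: field_simps)
  then show ?thesis unfolding K_def by (simp add: power2_eq_square)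
qed

definition Alg :: "nat \<Rightarrow> nat list \<Rightarrow> nat list qtree" where
  "Alg n lv = askfun (List.product [1..<Kf n + 1] [0..<Kf n]) (Qv n lv)
     (\<lambda>g. map (\<lambda>v. st (Kf n) n g v (lv ! v) (Kf n)) [0..<n])"

theorem lemma23:
  "\<exists>(A :: nat \<Rightarrow> nat list \<Rightarrow> nat list qtree) (c :: real).
     \<forall>n B. n \<ge> 2 \<longrightarrow> branching n B \<longrightarrow>
       (let res = run (mat_vec_oracle n (closure_graph n B))
                      (A n (map (level B) [0..<n]))
        in (\<forall>v<n. level B v \<ge> 1 \<longrightarrow> (fst res ! v, v) \<in> B)
           \<and> real (snd res) \<le> c * (ln (real n))\<^sup>2)"
proof (intro exI allI impI)
  fix n B assume n2: "2 \<le> n" and br: "branching n B"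
  define K where "K = Kf n"
  define lv where "lv = map (level B) [0..<n]"
  define orc where "orc = mat_vec_oracle n (closure_graph n B)"
  obtain g where g: "\<forall>i\<in>set (List.product [1..<K + 1] [0..<K]). g i = orc (Qv n lv i)"
    "run orc (Alg n lv) = (map (\<lambda>v. st K n g v (lv ! v) K) [0..<n], length (List.product [1..<K + 1] [0..<K]))"
    using run_askfun[where orc=orc and Q="Qv n lv" and ids="List.product [1..<Kf n + 1] [0..<Kf n]"
       and f="\<lambda>g. map (\<lambda>v. st (Kf n) n g v (lv ! v) (Kf n)) [0..<n]"]
    unfolding Alg_def K_def by blast
  have G: "\<And>k b. 1 \<le> k \<Longrightarrow> k \<le> K \<Longrightarrow> b < K \<Longrightarrow>
      g (k, b) = mat_vec_oracle n (closure_graph n B) (Qv n (map (level B) [0..<n]) (k, b))"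
  proof -
    fix k b assume h: "1 \<le> k" "k \<le> K" "b < K"
    have "(k, b) \<in> set (List.product [1..<K + 1] [0..<K])" using h by auto
    then show "g (k, b) = mat_vec_oracle n (closure_graph n B) (Qv n (map (level B) [0..<n]) (k, b))"
      using g(1) unfolding orc_def lv_def by blast
  qed
  have nK: "n \<le> 2 ^ K" using Kf_props[OF n2] K_def by simp
  have corr: "(st K n g v (lv ! v) K, v) \<in> B" if v: "v < n" and lev: "level B v \<ge> 1" for v
  proof -
    have lvv: "lv ! v = level B v" unfolding lv_def using v by simp
    have inv: "st K n g v (level B v) K \<in> anc B v \<and> level B (st K n g v (level B v) K) + 1 = level B v"
      using st_inv[OF br v nK refl G, of K] lev by simp
    obtain p where p: "(p, v) \<in> B" using level_root lev by fastforce
    have lp: "level B v = Suc (level B p)" using level_par[OF br p] .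
    have pa: "p \<in> anc B v" using anc_par(1)[OF br p] anc_self by blast
    have "st K n g v (level B v) K = p"
      using tree_struct[OF br refl, of v] inv pa lp by auto
    then show ?thesis using p lvv by simp
  qed
  show "let res = run (mat_vec_oracle n (closure_graph n B)) (Alg n (map (level B) [0..<n]))
        in (\<forall>v<n. level B v \<ge> 1 \<longrightarrow> (fst res ! v, v) \<in> B)
           \<and> real (snd res) \<le> 4 / (ln 2)^2 * (ln (real n))\<^sup>2"
    unfolding Let_def orc_def[symmetric] lv_def[symmetric] g(2)
    using corr Kf_bound[OF n2] K_def by simp
qed

end
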